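(* Let $G$ be a connected graph. (a) $O_{\rm SR}(G)=\mathcal{M}$ if and only if $G_{\rm SR}\cong xK_2$ for some positive integer $x$. (b) Let $H\in\{C_3,P_3,P_4,P_5\}$. If $G_{\rm SR}\cong H\cup xK_2$ (disjoint union) for some integer $x\ge 0$, then $O_{\rm SR}(G)=\mathcal{N}$. (c) Let $H^*\in\{K_m, C_m, P_{m+2}, xC_3\cup yP_3\}$, where $m\ge 4$ and $x+y\ge 2$. If $G_{\rm SR}$ contains $H^*$ as a subgraph, then $O_{\rm SR}(G)=\mathcal{B}$.
   Context: All graphs are finite, simple and undirected; $d(x,y)$ is the shortest-path distance. $P_n,C_n,K_n$ denote path, cycle and complete graph on $n$ vertices; $xK_2$ is the disjoint union of $x$ copies of $K_2$ and $\cup$ denotes disjoint union. A set $S\subseteq V(G)$ is a strong resolving set of a connected graph $G$ if for all distinct $x,y\in V(G)$ there exists $z\in S$ such that $x$ lies on a $y$–$z$ geodesic or $y$ lies on an $x$–$z$ geodesic. A vertex $u$ is maximally distant from $v$ if $d(u,v)\ge d(w,v)$ for every neighbor $w$ of $u$; $u,v$ are mutually maximally distant (MMD) if each is maximally distant from the other. The strong resolving graph $G_{\rm SR}$ has vertex set $\{x: x\text{ is MMD with some }y\}$ and edges exactly the MMD pairs. The Maker–Breaker strong resolving game on $G$: Maker and Breaker alternately select a not-yet-chosen vertex of $G$; Maker wins if the vertices he selects contain a strong resolving set of $G$, Breaker wins otherwise. In the M-game Maker moves first, in the B-game Breaker moves first. $O_{\rm SR}(G)=\mathcal{M}$ if Maker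 has a winning strategy in both games, $\mathcal{B}$ if Breaker has a winning strategy in both, and $\mathcal{N}$ if the first player has a winning strategy in each. *)

theory Defs
  imports Main
begin

type_synonym 'a graph = "'a set \<times> ('a \<Rightarrow> 'a \<Rightarrow> bool)"

definition simple_graph :: "'a graph \<Rightarrow> bool" where
  "simple_graph G \<longleftrightarrow> finite (fst G) \<and> (\<forall>x y. snd G x y \<longrightarrow> snd G y x)
     \<and> (\<forall>x. \<not> snd G x x) \<and> (\<forall>x y. snd G x y \<longrightarrow> x \<in> fst G \<and> y \<in> fst G)"

definition is_walk :: "'a graph \<Rightarrow> 'a list \<Rightarrow> bool" where
  "is_walk G xs \<longleftrightarrow> xs \<noteq> [] \<and> set xs \<subseteq> fst G
     \<and> (\<forall>i. Suc i < length xs \<longrightarrow> snd G (xs ! i) (xs ! Suc i))"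

definition walk_betw :: "'a graph \<Rightarrow> 'a \<Rightarrow> 'a \<Rightarrow> 'a list \<Rightarrow> bool" where
  "walk_betw G x y xs \<longleftrightarrow> is_walk G xs \<and> hd xs = x \<and> last xs = y"

definition connected_graph :: "'a graph \<Rightarrow> bool" where
  "connected_graph G \<longleftrightarrow> (\<forall>x\<in>fst G. \<forall>y\<in>fst G. \<exists>xs. walk_betw G x y xs)"

definition gdist :: "'a graph \<Rightarrow> 'a \<Rightarrow> 'a \<Rightarrow> nat" where
  "gdist G x y = (LEAST n. \<exists>xs. walk_betw G x y xs \<and> length xs = Suc n)"

definition geodesic :: "'a graph \<Rightarrow> 'a \<Rightarrow> 'a \<Rightarrow> 'a list \<Rightarrow> bool" where
  "geodesic G y z xs \<longleftrightarrow> walk_betw G y z xs \<and> length xs = Suc (gdist G y z)"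

definition on_geodesic :: "'a graph \<Rightarrow> 'a \<Rightarrow> 'a \<Rightarrow> 'a \<Rightarrow> bool" where
  "on_geodesic G x y z \<longleftrightarrow> (\<exists>xs. geodesic G y z xs \<and> x \<in> set xs)"

definition strong_resolving_set :: "'a graph \<Rightarrow> 'a set \<Rightarrow> bool" where
  "strong_resolving_set G S \<longleftrightarrow> S \<subseteq> fst G \<and>
     (\<forall>x\<in>fst G. \<forall>y\<in>fst G. x \<noteq> y \<longrightarrow>
        (\<exists>z\<in>S. on_geodesic G x y z \<or> on_geodesic G y x z))"

definition max_distant :: "'a graph \<Rightarrow> 'a \<Rightarrow> 'a \<Rightarrow> bool" where
  "max_distant G u v \<longleftrightarrow> u \<in> fst G \<and> v \<in> fst G \<and>
     (\<forall>w. snd G u w \<longrightarrow> gdist G w v \<le> gdist G u v)"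

definition mmd :: "'a graph \<Rightarrow> 'a \<Rightarrow> 'a \<Rightarrow> bool" where
  "mmd G u v \<longleftrightarrow> u \<noteq> v \<and> max_distant G u v \<and> max_distant G v u"

definition strong_resolving_graph :: "'a graph \<Rightarrow> 'a graph" where
  "strong_resolving_graph G = ({x \<in> fst G. \<exists>y. mmd G x y}, mmd G)"

text \<open>Maker--Breaker strong resolving game. Position: (Maker to move?, Maker's set, Breaker's set).
  The game ends when all vertices are chosen; Maker wins iff his set contains an SRS.\<close>
inductive maker_wins :: "'a graph \<Rightarrow> bool \<Rightarrow> 'a set \<Rightarrow> 'a set \<Rightarrow> bool" for G where
  end_game: "fst G - Mk - Br = {} \<Longrightarrow> \<exists>S\<subseteq>Mk. strong_resolving_set G S \<Longrightarrow> maker_wins G t Mk Br"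
| maker_move: "v \<in> fst G - Mk - Br \<Longrightarrow> maker_wins G False (insert v Mk) Br \<Longrightarrow> maker_wins G True Mk Br"
| breaker_move: "fst G - Mk - Br \<noteq> {} \<Longrightarrow> \<forall>v\<in>fst G - Mk - Br. maker_wins G True Mk (insert v Br)
     \<Longrightarrow> maker_wins G False Mk Br"

inductive breaker_wins :: "'a graph \<Rightarrow> bool \<Rightarrow> 'a set \<Rightarrow> 'a set \<Rightarrow> bool" for G where
  end_game: "fst G - Mk - Br = {} \<Longrightarrow> \<not> (\<exists>S\<subseteq>Mk. strong_resolving_set G S) \<Longrightarrow> breaker_wins G t Mk Br"
| breaker_move: "v \<in> fst G - Mk - Br \<Longrightarrow> breaker_wins G True Mk (insert v Br) \<Longrightarrow> breaker_wins G False Mk Br"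
| maker_move: "fst G - Mk - Br \<noteq> {} \<Longrightarrow> \<forall>v\<in>fst G - Mk - Br. breaker_wins G False (insert v Mk) Br
     \<Longrightarrow> breaker_wins G True Mk Br"

text \<open>M-game: Maker moves first (True); B-game: Breaker moves first (False).\<close>
definition O_SR_M :: "'a graph \<Rightarrow> bool" where
  "O_SR_M G \<longleftrightarrow> maker_wins G True {} {} \<and> maker_wins G False {} {}"

definition O_SR_B :: "'a graph \<Rightarrow> bool" where
  "O_SR_B G \<longleftrightarrow> breaker_wins G True {} {} \<and> breaker_wins G False {} {}"

definition O_SR_N :: "'a graph \<Rightarrow> bool" where
  "O_SR_N G \<longleftrightarrow> maker_wins G True {} {} \<and> breaker_wins G False {} {}"

definition graph_iso :: "'a graph \<Rightarrow> 'b graph \<Rightarrow> bool" where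
  "graph_iso G H \<longleftrightarrow> (\<exists>f. bij_betw f (fst G) (fst H) \<and>
     (\<forall>x\<in>fst G. \<forall>y\<in>fst G. snd G x y \<longleftrightarrow> snd H (f x) (f y)))"

definition subgraph_of :: "'b graph \<Rightarrow> 'a graph \<Rightarrow> bool" where
  "subgraph_of H G \<longleftrightarrow> (\<exists>f. inj_on f (fst H) \<and> f ` fst H \<subseteq> fst G \<and>
     (\<forall>x\<in>fst H. \<forall>y\<in>fst H. snd H x y \<longrightarrow> snd G (f x) (f y)))"

definition path_graph :: "nat \<Rightarrow> nat graph" where
  "path_graph n = ({..<n}, \<lambda>i j. i < n \<and> j < n \<and> (j = Suc i \<or> i = Suc j))"

definition cycle_graph :: "nat \<Rightarrow> nat graph" where
  "cycle_graph n = ({..<n}, \<lambda>i j. i < n \<and> j < n \<and> (j = Suc i mod n \<or> i = Suc j mod n))"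

definition complete_graph :: "nat \<Rightarrow> nat graph" where
  "complete_graph n = ({..<n}, \<lambda>i j. i < n \<and> j < n \<and> i \<noteq> j)"

fun sum_adj :: "('a \<Rightarrow> 'a \<Rightarrow> bool) \<Rightarrow> ('b \<Rightarrow> 'b \<Rightarrow> bool) \<Rightarrow> 'a + 'b \<Rightarrow> 'a + 'b \<Rightarrow> bool" where
  "sum_adj E1 E2 (Inl a) (Inl b) = E1 a b"
| "sum_adj E1 E2 (Inr a) (Inr b) = E2 a b"
| "sum_adj E1 E2 _ _ = False"

definition gunion :: "'a graph \<Rightarrow> 'b graph \<Rightarrow> ('a + 'b) graph" where
  "gunion G H = (Inl ` fst G \<union> Inr ` fst H, sum_adj (snd G) (snd H))"

definition copies :: "nat \<Rightarrow> 'a graph \<Rightarrow> ('a \<times> nat) graph" where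
  "copies x H = (fst H \<times> {..<x}, \<lambda>(a, i) (b, j). i = j \<and> i < x \<and> snd H a b)"

end

theory Submission
  imports Defs
begin


lemma is_walk_single[simp]: "is_walk G [x] \<longleftrightarrow> x \<in> fst G"
  by (auto simp: is_walk_def)

lemma is_walk_Cons2[simp]: "is_walk G (x#y#xs) \<longleftrightarrow> x \<in> fst G \<and> snd G x y \<and> is_walk G (y#xs)"
  unfolding is_walk_def
  apply (auto simp: less_Suc_eq_0_disj)
  done

lemma is_walk_append: "is_walk G xs \<Longrightarrow> is_walk G ys \<Longrightarrow> last xs = hd ys \<Longrightarrow> is_walk G (xs @ tl ys)"
proof (induction xs rule: induct_list012)
  case 1 then show ?case by (simp add: is_walk_def)
next
  case (2 x) then show ?case by (cases ys) auto
next
  case (3 x y zs) then show ?case by auto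
qed

lemma is_walk_rev: assumes "simple_graph G" "is_walk G xs" shows "is_walk G (rev xs)"
proof -
  have sym: "\<And>a b. snd G a b \<Longrightarrow> snd G b a" using assms(1) by (auto simp: simple_graph_def)
  have w: "\<And>j. Suc j < length xs \<Longrightarrow> snd G (xs ! j) (xs ! Suc j)" using assms(2) by (auto simp: is_walk_def)
  have "snd G (rev xs ! i) (rev xs ! Suc i)" if "Suc i < length xs" for i
  proof -
    define j where "j = length xs - Suc (Suc i)"
    have "Suc j < length xs" "length xs - Suc i = Suc j" "length xs - Suc (Suc i) = j" using that by (auto simp: j_def)
    then show ?thesis using w[of j] sym that by (simp add: rev_nth)
  qed
  then show ?thesis using assms(2) by (auto simp: is_walk_def)
qed

lemma is_walk_take: "is_walk G xs \<Longrightarrow> n > 0 \<Longrightarrow> is_walk G (take n xs)"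
  unfolding is_walk_def by (auto dest: in_set_takeD)

lemma is_walk_drop: "is_walk G xs \<Longrightarrow> n < length xs \<Longrightarrow> is_walk G (drop n xs)"
  unfolding is_walk_def by (auto dest: in_set_dropD)

lemma walk_betw_append: assumes "walk_betw G x y xs" "walk_betw G y z ys"
  shows "walk_betw G x z (xs @ tl ys)" "length (xs @ tl ys) = length xs + length ys - 1"
proof -
  have ne: "xs \<noteq> []" "ys \<noteq> []" using assms unfolding walk_betw_def is_walk_def by auto
  have "is_walk G (xs @ tl ys)" using is_walk_append[of G xs ys] assms unfolding walk_betw_def by auto
  moreover have "hd (xs @ tl ys) = x" using ne assms unfolding walk_betw_def by auto
  moreover have "last (xs @ tl ys) = z"
  proof (cases "tl ys = []")
    case True
    then have "ys = [hd ys]" using ne by (cases ys) auto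
    then show ?thesis using True assms unfolding walk_betw_def by (metis append.right_neutral last_ConsL)
  next
    case False
    then show ?thesis using assms ne unfolding walk_betw_def by (cases ys) auto
  qed
  ultimately show "walk_betw G x z (xs @ tl ys)" unfolding walk_betw_def by blast
  show "length (xs @ tl ys) = length xs + length ys - 1" using ne by (cases ys) auto
qed

definition cov :: "'a graph \<Rightarrow> 'a set \<Rightarrow> bool" where
  "cov G M \<longleftrightarrow> (\<forall>u v. mmd G u v \<longrightarrow> u \<in> M \<or> v \<in> M)"

lemma mmd_sym: "mmd G u v \<Longrightarrow> mmd G v u" by (auto simp: mmd_def)
lemma mmd_V: "mmd G u v \<Longrightarrow> u \<in> fst G \<and> v \<in> fst G \<and> u \<noteq> v" by (auto simp: mmd_def max_distant_def)

locale sg =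
  fixes G :: "'a graph"
  assumes simple: "simple_graph G" and conn: "connected_graph G"
begin

abbreviation "V \<equiv> fst G"
abbreviation "E \<equiv> snd G"
abbreviation "d \<equiv> gdist G"

lemma E_V: "E x y \<Longrightarrow> x \<in> V \<and> y \<in> V" using simple by (auto simp: simple_graph_def)
lemma E_sym: "E x y \<Longrightarrow> E y x" using simple by (auto simp: simple_graph_def)
lemma E_irr: "\<not> E x x" using simple by (auto simp: simple_graph_def)
lemma finV: "finite V" using simple by (auto simp: simple_graph_def)

lemma walk_V: "walk_betw G x y xs \<Longrightarrow> x \<in> V \<and> y \<in> V"
  unfolding walk_betw_def is_walk_def by auto

lemma gdist_walk: assumes "x \<in> V" "y \<in> V"
  shows "\<exists>xs. walk_betw G x y xs \<and> length xs = Suc (d x y)"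
proof -
  obtain xs where w: "walk_betw G x y xs" using conn assms unfolding connected_graph_def by blast
  then have "length xs = Suc (length xs - 1)" unfolding walk_betw_def is_walk_def by auto
  with w have "\<exists>n xs. walk_betw G x y xs \<and> length xs = Suc n" by blast
  then show ?thesis unfolding gdist_def by (rule LeastI_ex)
qed

lemma gdist_le: assumes "walk_betw G x y xs" shows "d x y \<le> length xs - 1"
proof -
  have "length xs = Suc (length xs - 1)" using assms unfolding walk_betw_def is_walk_def by auto
  with assms show ?thesis unfolding gdist_def by (metis (mono_tags, lifting) Least_le)
qed

lemma gdist_0[simp]: "x \<in> V \<Longrightarrow> d x x = 0"
  using gdist_le[of x x "[x]"] by (simp add: walk_betw_def)

lemma gdist_eq0: assumes "x \<in> V" "y \<in> V" "d x y = 0" shows "x = y"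
proof -
  obtain xs where "walk_betw G x y xs" "length xs = Suc 0" using gdist_walk assms by fastforce
  then show ?thesis unfolding walk_betw_def by (cases xs) auto
qed

lemma gdist_sym: assumes "x \<in> V" "y \<in> V" shows "d x y = d y x"
proof -
  have "d a b \<le> d b a" if ab: "a \<in> V" "b \<in> V" for a b
  proof -
    obtain xs where w: "walk_betw G b a xs" "length xs = Suc (d b a)" using gdist_walk ab by blast
    then have "walk_betw G a b (rev xs)" using is_walk_rev[OF simple]
      unfolding walk_betw_def by (auto simp: hd_rev last_rev)
    from gdist_le[OF this] w show ?thesis by simp
  qed
  with assms show ?thesis by (meson le_antisym)
qed

lemma gdist_tri: assumes "x \<in> V" "y \<in> V" "z \<in> V" shows "d x z \<le> d x y + d y z"
proof -
  obtain xs where w1: "walk_betw G x y xs" "length xs = Suc (d x y)" using gdist_walk assms by blast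
  obtain ys where w2: "walk_betw G y z ys" "length ys = Suc (d y z)" using gdist_walk assms by blast
  from gdist_le[OF walk_betw_append(1)[OF w1(1) w2(1)]] walk_betw_append(2)[OF w1(1) w2(1)] w1 w2
  show ?thesis by simp
qed

lemma gdist_edge: assumes "E x y" shows "d x y \<le> 1"
proof -
  have "walk_betw G x y [x,y]" using E_V[OF assms] assms by (simp add: walk_betw_def)
  from gdist_le[OF this] show ?thesis by simp
qed

lemma step_toward: assumes "x \<in> V" "z \<in> V" "x \<noteq> z"
  shows "\<exists>w. E x w \<and> Suc (d w z) = d x z"
proof -
  obtain xs where w: "walk_betw G x z xs" "length xs = Suc (d x z)" using gdist_walk assms by blast
  then obtain w rest where xs: "xs = x # w # rest" using assms(3)
    unfolding walk_betw_def by (cases xs; cases "tl xs") auto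
  have "E x w" using w xs unfolding walk_betw_def by auto
  have "walk_betw G w z (w # rest)" using w xs unfolding walk_betw_def by auto
  from gdist_le[OF this] have "d w z \<le> length rest" by simp
  moreover have "d x z \<le> d x w + d w z" using gdist_tri \<open>E x w\<close> E_V assms by blast
  moreover have "d x w \<le> 1" using gdist_edge \<open>E x w\<close> .
  ultimately show ?thesis using w xs \<open>E x w\<close> by auto
qed

lemma ongeo_D: assumes "on_geodesic G x y z"
  shows "x \<in> V \<and> y \<in> V \<and> z \<in> V \<and> d y x + d x z = d y z"
proof -
  obtain xs where g: "walk_betw G y z xs" "length xs = Suc (d y z)" "x \<in> set xs"
    using assms unfolding on_geodesic_def geodesic_def by blast
  then obtain i where i: "i < length xs" "xs ! i = x" by (metis in_set_conv_nth)
  have yz: "y \<in> V" "z \<in> V" using walk_V g by auto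
  have xV: "x \<in> V" using g unfolding walk_betw_def is_walk_def by auto
  have h1: "hd (take (Suc i) xs) = y" using g unfolding walk_betw_def by simp
  have l1: "last (take (Suc i) xs) = x" using i by (simp add: take_Suc_conv_app_nth)
  have "is_walk G (take (Suc i) xs)" using g is_walk_take[of G xs "Suc i"] unfolding walk_betw_def by simp
  then have "walk_betw G y x (take (Suc i) xs)" using h1 l1 unfolding walk_betw_def by simp
  from gdist_le[OF this] have 1: "d y x \<le> i" using i by simp
  have h2: "hd (drop i xs) = x" using i by (simp add: hd_drop_conv_nth)
  have l2: "last (drop i xs) = z" using i g unfolding walk_betw_def by simp
  have "is_walk G (drop i xs)" using g i is_walk_drop[of G xs i] unfolding walk_betw_def by simp
  then have "walk_betw G x z (drop i xs)" using h2 l2 unfolding walk_betw_def by simp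
  from gdist_le[OF this] have 2: "d x z \<le> length xs - 1 - i" using i by simp
  have "d y z \<le> d y x + d x z" using gdist_tri xV yz by blast
  have "length xs - 1 - i + i = d y z" using g i by simp
  with 1 2 xV yz \<open>d y z \<le> d y x + d x z\<close> show ?thesis by linarith
qed

lemma ongeo_I: assumes "x \<in> V" "y \<in> V" "z \<in> V" "d y x + d x z = d y z"
  shows "on_geodesic G x y z"
proof -
  obtain xs where w1: "walk_betw G y x xs" "length xs = Suc (d y x)" using gdist_walk assms by blast
  obtain ys where w2: "walk_betw G x z ys" "length ys = Suc (d x z)" using gdist_walk assms by blast
  have "walk_betw G y z (xs @ tl ys)" using walk_betw_append(1)[OF w1(1) w2(1)] .
  moreover have "x \<in> set (xs @ tl ys)"
  proof -
    have "xs \<noteq> []" "last xs = x" using w1 unfolding walk_betw_def is_walk_def by auto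
    then have "x \<in> set xs" using last_in_set by metis
    then show ?thesis by simp
  qed
  moreover have "length (xs @ tl ys) = Suc (d y z)" using walk_betw_append(2)[OF w1(1) w2(1)] w1 w2 assms(4) by simp
  ultimately show ?thesis unfolding on_geodesic_def geodesic_def by blast
qed


lemma ongeo_mmd: assumes "mmd G u v" "on_geodesic G u v z" shows "z = u"
proof (rule ccontr)
  assume zu: "z \<noteq> u"
  have uv: "u \<in> V" "v \<in> V" using mmd_V[OF assms(1)] by auto
  have eq: "d v u + d u z = d v z" and zV: "z \<in> V" using ongeo_D[OF assms(2)] by auto
  obtain w where w: "E u w" "Suc (d w z) = d u z" using step_toward[OF uv(1) zV] zu by metis
  have wV: "w \<in> V" using E_V w by blast
  have "d v z \<le> d v w + d w z" using gdist_tri uv wV zV by blast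
  moreover have "d w v \<le> d u v" using assms(1) w(1) unfolding mmd_def max_distant_def by blast
  moreover have "d v w = d w v" "d v u = d u v" using gdist_sym uv wV by auto
  ultimately show False using eq w(2) by linarith
qed

lemma srs_cov: assumes "strong_resolving_set G S" shows "cov G S"
  unfolding cov_def
proof (intro allI impI)
  fix u v assume m: "mmd G u v"
  show "u \<in> S \<or> v \<in> S"
  proof (rule ccontr)
    assume n: "\<not> (u \<in> S \<or> v \<in> S)"
    have uv: "u \<in> V" "v \<in> V" "u \<noteq> v" using mmd_V[OF m] by auto
    then obtain z where z: "z \<in> S" "on_geodesic G u v z \<or> on_geodesic G v u z"
      using assms unfolding strong_resolving_set_def by blast
    then have "z = u \<or> z = v" using ongeo_mmd[OF m] ongeo_mmd[OF mmd_sym[OF m]] by blast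
    then show False using n z by blast
  qed
qed

lemma exists_mmd_ext: assumes xy: "x \<in> V" "y \<in> V" "x \<noteq> y"
  shows "\<exists>u v. u \<in> V \<and> v \<in> V \<and> d u v = d u x + d x y + d y v \<and> mmd G u v"
proof -
  define P where "P = {p \<in> V \<times> V. d (fst p) (snd p) = d (fst p) x + d x y + d y (snd p)}"
  define f where "f = (\<lambda>p. d (fst p) (snd p))"
  have finP: "finite P" unfolding P_def using finV by auto
  have xyP: "(x, y) \<in> P" unfolding P_def using xy by auto
  define M where "M = Max (f ` P)"
  have "M \<in> f ` P" unfolding M_def using finP xyP by (intro Max_in) auto
  then obtain p where p: "p \<in> P" "f p = M" by auto
  have maxP: "\<And>q. q \<in> P \<Longrightarrow> f q \<le> M" unfolding M_def using finP by auto
  obtain u v where pu: "p = (u, v)" by (cases p)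
  have uvV: "u \<in> V" "v \<in> V" and good: "d u v = d u x + d x y + d y v" using p(1) pu unfolding P_def by auto
  have dxy: "d x y > 0" using gdist_eq0 xy by blast
  have "u \<noteq> v" using good dxy uvV by auto
  moreover have "max_distant G u v" unfolding max_distant_def
  proof (intro conjI allI impI uvV)
    fix w assume uw: "E u w"
    have wV: "w \<in> V" using E_V uw by blast
    show "d w v \<le> d u v"
    proof (rule ccontr)
      assume c: "\<not> d w v \<le> d u v"
      have "d w x \<le> d w u + d u x" using gdist_tri wV uvV xy by blast
      moreover have "d w u \<le> 1" using gdist_edge[OF E_sym[OF uw]] .
      moreover have "d w v \<le> d w x + d x v" using gdist_tri wV uvV xy by blast
      moreover have "d x v \<le> d x y + d y v" using gdist_tri uvV xy by blast
      moreover have "d w v \<le> d w x + d x y + d y v" using calculation by linarith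
      ultimately have "d w v = d w x + d x y + d y v" using c good by linarith
      then have "(w, v) \<in> P" unfolding P_def using wV uvV by auto
      from maxP[OF this] have "d w v \<le> d u v" using p pu unfolding f_def by auto
      then show False using c by blast
    qed
  qed
  moreover have "max_distant G v u" unfolding max_distant_def
  proof (intro conjI allI impI uvV)
    fix w assume vw: "E v w"
    have wV: "w \<in> V" using E_V vw by blast
    show "d w u \<le> d v u"
    proof (rule ccontr)
      assume c: "\<not> d w u \<le> d v u"
      have s: "d w u = d u w" "d v u = d u v" using gdist_sym wV uvV by auto
      have "d y w \<le> d y v + d v w" using gdist_tri wV uvV xy by blast
      moreover have "d v w \<le> 1" using gdist_edge[OF vw] .
      moreover have "d u w \<le> d u y + d y w" using gdist_tri wV uvV xy by blast
      moreover have "d u y \<le> d u x + d x y" using gdist_tri uvV xy by blast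
      moreover have "d u w \<le> d u x + d x y + d y w" using calculation by linarith
      ultimately have "d u w = d u x + d x y + d y w" using c good s by linarith
      then have "(u, w) \<in> P" unfolding P_def using wV uvV by auto
      from maxP[OF this] have "d u w \<le> d u v" using p pu unfolding f_def by auto
      then show False using c s by linarith
    qed
  qed
  ultimately show ?thesis using uvV good unfolding mmd_def by blast
qed

lemma exists_mmd: assumes "x \<in> V" "y \<in> V" "x \<noteq> y" shows "\<exists>u v. mmd G u v"
  using exists_mmd_ext[OF assms] by blast

lemma cov_srs: assumes "cov G M" shows "strong_resolving_set G (M \<inter> V)"
  unfolding strong_resolving_set_def
proof (intro conjI ballI impI)
  show "M \<inter> V \<subseteq> V" by blast
  fix x y assume xy: "x \<in> V" "y \<in> V" "x \<noteq> y"
  obtain u v where uv: "u \<in> V" "v \<in> V" "d u v = d u x + d x y + d y v" "mmd G u v"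
    using exists_mmd_ext[OF xy] by blast
  have t1: "d u v \<le> d u y + d y v" "d u y \<le> d u x + d x y" "d u v \<le> d u x + d x v" "d x v \<le> d x y + d y v"
    using gdist_tri uv xy by blast+
  have s: "d y x = d x y" "d x u = d u x" "d y u = d u y" using gdist_sym uv xy by auto
  have "u \<in> M \<or> v \<in> M" using assms uv(4) unfolding cov_def by blast
  then show "\<exists>z\<in>M \<inter> V. on_geodesic G x y z \<or> on_geodesic G y x z"
  proof
    assume "u \<in> M"
    have "on_geodesic G x y u" using ongeo_I[OF xy(1,2) uv(1)] t1 s uv(3) by linarith
    then show ?thesis using \<open>u \<in> M\<close> uv by blast
  next
    assume "v \<in> M"
    have "on_geodesic G y x v" using ongeo_I[OF xy(2,1) uv(2)] t1 s uv(3) by linarith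
    then show ?thesis using \<open>v \<in> M\<close> uv by blast
  qed
qed

lemma win_iff: "(\<exists>S\<subseteq>M. strong_resolving_set G S) \<longleftrightarrow> cov G M"
proof
  assume "\<exists>S\<subseteq>M. strong_resolving_set G S"
  then obtain S where "S \<subseteq> M" "strong_resolving_set G S" by blast
  then show "cov G M" using srs_cov unfolding cov_def by blast
next
  assume "cov G M" then show "\<exists>S\<subseteq>M. strong_resolving_set G S" using cov_srs by blast
qed

end



lemma no_both: "maker_wins G t Mk Br \<Longrightarrow> breaker_wins G t Mk Br \<Longrightarrow> False"
proof (induction rule: maker_wins.induct)
  case (end_game Mk Br t)
  from end_game.prems show ?case
  proof (cases rule: breaker_wins.cases)
    case end_game then show ?thesis using \<open>\<exists>S\<subseteq>Mk. strong_resolving_set G S\<close> by blast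
  next
    case (breaker_move v) then show ?thesis using \<open>fst G - Mk - Br = {}\<close> by blast
  next
    case maker_move then show ?thesis using \<open>fst G - Mk - Br = {}\<close> by blast
  qed
next
  case (maker_move v Mk Br)
  from maker_move.prems show ?case
  proof (cases rule: breaker_wins.cases)
    case end_game then show ?thesis using \<open>v \<in> fst G - Mk - Br\<close> by blast
  next
    case (breaker_move v) then show ?thesis by simp
  next
    case maker_move then show ?thesis using \<open>v \<in> fst G - Mk - Br\<close> \<open>breaker_wins G False (insert v Mk) Br \<Longrightarrow> False\<close> by blast
  qed
next
  case (breaker_move Mk Br)
  from breaker_move.prems show ?case
  proof (cases rule: breaker_wins.cases)
    case end_game then show ?thesis using \<open>fst G - Mk - Br \<noteq> {}\<close> by blast
  next
    case (breaker_move v) then show ?thesis using \<open>\<forall>v\<in>fst G - Mk - Br. maker_wins G True Mk (insert v Br) \<and> (breaker_wins G True Mk (insert v Br) \<longrightarrow> False)\<close> by blast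
  next
    case maker_move then show ?thesis by simp
  qed
qed

context sg
begin

abbreviation "free Mk Br \<equiv> V - Mk - Br"

lemma card_free_less: "v \<in> free Mk Br \<Longrightarrow> card (V - insert v Mk - Br) < card (free Mk Br)"
  "v \<in> free Mk Br \<Longrightarrow> card (V - Mk - insert v Br) < card (free Mk Br)"
proof -
  assume v: "v \<in> free Mk Br"
  have "V - insert v Mk - Br = free Mk Br - {v}" "V - Mk - insert v Br = free Mk Br - {v}" by auto
  moreover have "card (free Mk Br - {v}) < card (free Mk Br)"
    using v finV by (intro card_Diff1_less) auto
  ultimately show "card (V - insert v Mk - Br) < card (free Mk Br)"
    "card (V - Mk - insert v Br) < card (free Mk Br)" by auto
qed

lemma L1: assumes "mmd G a b" "a \<in> Br" "b \<in> Br" "a \<notin> Mk" "b \<notin> Mk"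
  shows "breaker_wins G t Mk Br"
  using assms
proof (induction "card (free Mk Br)" arbitrary: t Mk Br rule: less_induct)
  case less
  show ?case
  proof (cases "free Mk Br = {}")
    case True
    have "\<not> cov G Mk" using less.prems unfolding cov_def by blast
    then show ?thesis using True win_iff by (intro breaker_wins.end_game) auto
  next
    case False
    show ?thesis
    proof (cases t)
      case True
      have "breaker_wins G False (insert v Mk) Br" if v: "v \<in> free Mk Br" for v
        using less.hyps[OF card_free_less(1)[OF v]] less.prems v by auto
      then show ?thesis using False True by (auto intro: breaker_wins.maker_move)
    next
      case f: False
      then obtain v where v: "v \<in> free Mk Br" using False by blast
      have "breaker_wins G True Mk (insert v Br)"
        using less.hyps[OF card_free_less(2)[OF v]] less.prems v by auto
      then show ?thesis using f v by (auto intro: breaker_wins.breaker_move)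
    qed
  qed
qed

lemma L2: assumes "mmd G b a" "mmd G b c" "a \<noteq> c" "b \<in> Br" "b \<notin> Mk" "a \<in> free Mk Br" "c \<in> free Mk Br"
  shows "breaker_wins G True Mk Br"
proof -
  have "breaker_wins G False (insert v Mk) Br" if v: "v \<in> free Mk Br" for v
  proof (cases "v = a")
    case True
    have "breaker_wins G True (insert v Mk) (insert c Br)"
      by (rule L1[OF assms(2)]) (use assms True v in blast)+
    then show ?thesis using assms True v by (intro breaker_wins.breaker_move[of c]) blast+
  next
    case False
    have "breaker_wins G True (insert v Mk) (insert a Br)"
      by (rule L1[OF assms(1)]) (use assms False v in blast)+
    then show ?thesis using assms False v by (intro breaker_wins.breaker_move[of a]) blast+
  qed
  then show ?thesis using assms by (intro breaker_wins.maker_move) blast+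
qed

lemma L3: assumes "mmd G b a" "mmd G b c" "a \<noteq> c" "a \<in> free Mk Br" "b \<in> free Mk Br" "c \<in> free Mk Br"
  shows "breaker_wins G False Mk Br"
proof -
  have "b \<noteq> a" "b \<noteq> c" using mmd_V[OF assms(1)] mmd_V[OF assms(2)] by simp_all
  then have f: "a \<in> free Mk (insert b Br)" "c \<in> free Mk (insert b Br)" using assms(4,6) by auto
  have "breaker_wins G True Mk (insert b Br)"
    by (rule L2[OF assms(1,2,3) _ _ f]) (use assms(5) in simp_all)
  with assms(5) show ?thesis by (rule breaker_wins.breaker_move)
qed

lemma L4: assumes "free Mk Br \<noteq> {}"
  "\<forall>v \<in> free Mk Br. \<exists>a b c. mmd G b a \<and> mmd G b c \<and> a \<noteq> c \<and>
      a \<in> free Mk Br - {v} \<and> b \<in> free Mk Br - {v} \<and> c \<in> free Mk Br - {v}"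
  shows "breaker_wins G True Mk Br"
proof -
  have "breaker_wins G False (insert v Mk) Br" if v: "v \<in> free Mk Br" for v
  proof -
    obtain a b c where abc: "mmd G b a" "mmd G b c" "a \<noteq> c"
      "a \<in> free Mk Br - {v}" "b \<in> free Mk Br - {v}" "c \<in> free Mk Br - {v}" using assms(2) v by blast
    have "a \<in> free (insert v Mk) Br" "b \<in> free (insert v Mk) Br" "c \<in> free (insert v Mk) Br"
      using abc(4-6) by auto
    from L3[OF abc(1-3) this] show ?thesis .
  qed
  then have "\<forall>v\<in>free Mk Br. breaker_wins G False (insert v Mk) Br" by blast
  with assms(1) show ?thesis by (rule breaker_wins.maker_move)
qed

definition Inv :: "'a set \<Rightarrow> 'a set \<Rightarrow> bool" where
  "Inv Mk Br \<longleftrightarrow> (\<forall>u v. mmd G u v \<longrightarrow> u \<in> Mk \<or> v \<in> Mk \<or> (u \<notin> Br \<and> v \<notin> Br))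
     \<and> (\<forall>u v w. mmd G u v \<and> mmd G u w \<and> u \<notin> Mk \<and> v \<notin> Mk \<and> w \<notin> Mk \<longrightarrow> v = w)"

lemma Inv_mono: "Inv Mk Br \<Longrightarrow> Inv (insert v Mk) Br"
  unfolding Inv_def by blast

lemma M1: assumes "Inv Mk Br" shows "maker_wins G t Mk Br"
  using assms
proof (induction "card (free Mk Br)" arbitrary: t Mk Br rule: less_induct)
  case less
  show ?case
  proof (cases "free Mk Br = {}")
    case True
    have "cov G Mk" unfolding cov_def
    proof (intro allI impI)
      fix u v assume m: "mmd G u v"
      show "u \<in> Mk \<or> v \<in> Mk" using less.prems m mmd_V[OF m] True unfolding Inv_def by blast
    qed
    then show ?thesis using True win_iff by (intro maker_wins.end_game) auto
  next
    case False
    show ?thesis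
    proof (cases t)
      case True
      then obtain v where v: "v \<in> free Mk Br" using False by blast
      have "maker_wins G False (insert v Mk) Br"
        using less.hyps[OF card_free_less(1)[OF v]] Inv_mono[OF less.prems] by auto
      then show ?thesis using True v by (auto intro: maker_wins.maker_move)
    next
      case f: False
      have "maker_wins G True Mk (insert v Br)" if v: "v \<in> free Mk Br" for v
      proof (cases "\<exists>w. mmd G v w \<and> w \<notin> Mk")
        case True
        then obtain w where w: "mmd G v w" "w \<notin> Mk" by blast
        have wfree: "w \<in> V - Mk - insert v Br"
          using less.prems w v mmd_V[OF w(1)] unfolding Inv_def by blast
        have I: "Inv (insert w Mk) (insert v Br)"
          unfolding Inv_def
        proof (intro conjI allI impI)
          fix u u' assume m: "mmd G u u'"
          show "u \<in> insert w Mk \<or> u' \<in> insert w Mk \<or> u \<notin> insert v Br \<and> u' \<notin> insert v Br"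
          proof (cases "u \<in> insert w Mk \<or> u' \<in> insert w Mk")
            case True then show ?thesis by blast
          next
            case nf: False
            have "u \<notin> Br \<and> u' \<notin> Br" using less.prems m nf unfolding Inv_def by blast
            moreover have "u \<noteq> v"
            proof
              assume "u = v"
              then have "u' = w" using less.prems m w nf v unfolding Inv_def by blast
              then show False using nf by blast
            qed
            moreover have "u' \<noteq> v"
            proof
              assume "u' = v"
              then have "u = w" using less.prems mmd_sym[OF m] w nf v unfolding Inv_def by blast
              then show False using nf by blast
            qed
            ultimately show ?thesis by blast
          qed
        next
          fix u v' w' assume "mmd G u v' \<and> mmd G u w' \<and> u \<notin> insert w Mk \<and> v' \<notin> insert w Mk \<and> w' \<notin> insert w Mk"
          then show "v' = w'" using less.prems unfolding Inv_def by blast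
        qed
        have "card (V - insert w Mk - insert v Br) < card (V - Mk - insert v Br)"
          using card_free_less(1)[OF wfree] .
        also have "\<dots> < card (free Mk Br)" using card_free_less(2)[OF v] .
        finally have "maker_wins G False (insert w Mk) (insert v Br)"
          using less.hyps I by blast
        then show ?thesis using wfree by (intro maker_wins.maker_move)
      next
        case False
        have I: "Inv Mk (insert v Br)"
          using less.prems False unfolding Inv_def by (metis insert_iff mmd_sym)
        show ?thesis using less.hyps[OF card_free_less(2)[OF v]] I by blast
      qed
      then show ?thesis using f False by (auto intro: maker_wins.breaker_move)
    qed
  qed
qed

end



lemma matching_iso:
  assumes "finite W" "\<forall>u\<in>W. \<exists>v. R u v" "\<forall>u\<in>W. \<forall>v w. R u v \<longrightarrow> R u w \<longrightarrow> v = w"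
    "\<forall>u\<in>W. \<forall>v. R u v \<longrightarrow> v \<in> W" "\<forall>u v. R u v \<longrightarrow> R v u" "\<forall>u. \<not> R u u"
  shows "\<exists>f. bij_betw f W ({..<2::nat} \<times> {..<card W div 2}) \<and>
     (\<forall>a\<in>W. \<forall>b\<in>W. R a b \<longleftrightarrow> (snd (f a) = snd (f b) \<and> fst (f a) \<noteq> fst (f b)))"
  using assms
proof (induction "card W" arbitrary: W rule: less_induct)
  case less
  show ?case
  proof (cases "W = {}")
    case True then show ?thesis by (auto simp: bij_betw_def)
  next
    case False
    then obtain u where u: "u \<in> W" by blast
    then obtain v where uv: "R u v" using less.prems(2) by blast
    have vW: "v \<in> W" using less.prems(4) u uv by blast
    have vu: "v \<noteq> u" using less.prems(6) uv by blast
    define W' where "W' = W - {u, v}"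
    have "card {u, v} \<le> card W" using less.prems(1) u vW by (intro card_mono) auto
    then have c2: "2 \<le> card W" using vu by simp
    have cW: "card W = card W' + 2" unfolding W'_def using less.prems(1) u vW vu c2
      by (simp add: card_Diff_subset)
    have pu: "R u z \<longleftrightarrow> z = v" for z using less.prems(3) u uv by blast
    have pv: "R v z \<longleftrightarrow> z = u" for z using less.prems(3,5) vW uv by blast
    have cl: "\<forall>a\<in>W'. \<forall>z. R a z \<longrightarrow> z \<in> W'"
    proof (intro ballI allI impI)
      fix a z assume a: "a \<in> W'" "R a z"
      have "z \<in> W" using less.prems(4) a unfolding W'_def by blast
      moreover have "z \<noteq> u" using a pu less.prems(5) unfolding W'_def by blast
      moreover have "z \<noteq> v" using a pv less.prems(5) unfolding W'_def by blast
      ultimately show "z \<in> W'" unfolding W'_def by blast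
    qed
    have lt: "card W' < card W" using cW by simp
    have p1: "finite W'" using less.prems(1) unfolding W'_def by simp
    have p2: "\<forall>a\<in>W'. \<exists>z. R a z" using less.prems(2) unfolding W'_def by blast
    have p3: "\<forall>a\<in>W'. \<forall>z w. R a z \<longrightarrow> R a w \<longrightarrow> z = w" using less.prems(3) unfolding W'_def by blast
    from less.hyps[of W', OF lt p1 p2 p3 cl less.prems(5) less.prems(6)]
    obtain f' where f': "bij_betw f' W' ({..<2::nat} \<times> {..<card W' div 2})"
      "\<forall>a\<in>W'. \<forall>b\<in>W'. R a b \<longleftrightarrow> (snd (f' a) = snd (f' b) \<and> fst (f' a) \<noteq> fst (f' b))"
      by blast
    define k where "k = card W' div 2"
    define f where "f = f'(u := (0::nat, k), v := (1, k))"
    have b1: "bij_betw f W' ({..<2::nat} \<times> {..<k})"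
      using f'(1) unfolding k_def by (subst bij_betw_cong[where g = f']) (auto simp: f_def W'_def)
    have b2: "bij_betw f {u, v} {(0, k), (1, k)}"
      using vu unfolding bij_betw_def f_def by auto
    have b3: "bij_betw f (W' \<union> {u, v}) ({..<2::nat} \<times> {..<k} \<union> {(0, k), (1, k)})"
      by (rule bij_betw_combine[OF b1 b2]) auto
    have e1: "W' \<union> {u, v} = W" unfolding W'_def using u vW by blast
    have e2: "{..<2::nat} \<times> {..<k} \<union> {(0, k), (1, k)} = {..<2::nat} \<times> {..<card W div 2}"
      using cW unfolding k_def by (auto simp: less_Suc_eq)
    have rng: "\<And>a. a \<in> W' \<Longrightarrow> snd (f a) < k"
    proof -
      fix a assume "a \<in> W'"
      then have "f a \<in> {..<2::nat} \<times> {..<k}" using b1 unfolding bij_betw_def by blast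
      then show "snd (f a) < k" by auto
    qed
    have fu: "f u = (0, k)" and fv: "f v = (1, k)" using vu by (auto simp: f_def)
    have fW': "\<And>a. a \<in> W' \<Longrightarrow> f a = f' a" by (auto simp: f_def W'_def)
    have adj: "R a b \<longleftrightarrow> (snd (f a) = snd (f b) \<and> fst (f a) \<noteq> fst (f b))" if ab: "a \<in> W" "b \<in> W" for a b
    proof -
      consider "a = u" | "a = v" | "a \<in> W'" using ab unfolding W'_def by blast
      then show ?thesis
      proof cases
        case 1
        then show ?thesis using ab pu fu fv rng[of b] unfolding W'_def by (cases "b = u"; cases "b = v") auto
      next
        case 2
        then show ?thesis using ab pv fu fv rng[of b] unfolding W'_def by (cases "b = u"; cases "b = v") auto
      next
        case 3
        consider "b = u" | "b = v" | "b \<in> W'" using ab unfolding W'_def by blast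
        then show ?thesis
        proof cases
          case 1 then show ?thesis using 3 pu less.prems(5) fu rng[of a] unfolding W'_def by auto
        next
          case 2 then show ?thesis using 3 pv less.prems(5) fv rng[of a] unfolding W'_def by auto
        next
          case b3: 3 then show ?thesis using 3 f'(2) fW' by auto
        qed
      qed
    qed
    show ?thesis using b3 adj unfolding e1 e2 by blast
  qed
qed




lemma lt3: "{..<3::nat} = {0,1,2}" by auto
lemma lt4: "{..<4::nat} = {0,1,2,3}" by auto
lemma lt5: "{..<5::nat} = {0,1,2,3,4}" by auto

lemma hC3: "\<forall>j\<in>fst (cycle_graph 3). \<forall>j'\<in>fst (cycle_graph 3). \<forall>j''\<in>fst (cycle_graph 3).
  snd (cycle_graph 3) j j' \<longrightarrow> snd (cycle_graph 3) j j'' \<longrightarrow> j \<noteq> 0 \<longrightarrow> j' \<noteq> 0 \<longrightarrow> j'' \<noteq> 0 \<longrightarrow> j' = j''"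
  unfolding cycle_graph_def fst_conv snd_conv lt3 by simp

lemma hP3: "\<forall>j\<in>fst (path_graph 3). \<forall>j'\<in>fst (path_graph 3). \<forall>j''\<in>fst (path_graph 3).
  snd (path_graph 3) j j' \<longrightarrow> snd (path_graph 3) j j'' \<longrightarrow> j \<noteq> 1 \<longrightarrow> j' \<noteq> 1 \<longrightarrow> j'' \<noteq> 1 \<longrightarrow> j' = j''"
  unfolding path_graph_def fst_conv snd_conv lt3 by simp

lemma hP4: "\<forall>j\<in>fst (path_graph 4). \<forall>j'\<in>fst (path_graph 4). \<forall>j''\<in>fst (path_graph 4).
  snd (path_graph 4) j j' \<longrightarrow> snd (path_graph 4) j j'' \<longrightarrow> j \<noteq> 1 \<longrightarrow> j' \<noteq> 1 \<longrightarrow> j'' \<noteq> 1 \<longrightarrow> j' = j''"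
  unfolding path_graph_def fst_conv snd_conv lt4 by simp

lemma hP5: "\<forall>j\<in>fst (path_graph 5). \<forall>j'\<in>fst (path_graph 5). \<forall>j''\<in>fst (path_graph 5).
  snd (path_graph 5) j j' \<longrightarrow> snd (path_graph 5) j j'' \<longrightarrow> j \<noteq> 2 \<longrightarrow> j' \<noteq> 2 \<longrightarrow> j'' \<noteq> 2 \<longrightarrow> j' = j''"
  unfolding path_graph_def fst_conv snd_conv lt5 by simp

definition tri :: "'b graph \<Rightarrow> 'b \<Rightarrow> 'b \<Rightarrow> 'b \<Rightarrow> bool" where
  "tri H a b c \<longleftrightarrow> a \<in> fst H \<and> b \<in> fst H \<and> c \<in> fst H \<and> snd H b a \<and> snd H b c \<and> a \<noteq> c"

lemma triH: "tri (cycle_graph 3) 0 1 2" "tri (path_graph 3) 0 1 2" "tri (path_graph 4) 0 1 2" "tri (path_graph 5) 0 1 2"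
  by (simp_all add: tri_def cycle_graph_def path_graph_def)




definition goodH :: "'b graph \<Rightarrow> bool" where
  "goodH H \<longleftrightarrow> (\<exists>a b c. tri H a b c) \<and> (\<forall>j\<in>fst H. \<exists>a b c. tri H a b c \<and> j \<notin> {a, b, c})"

lemma good_disj: "tri H a b c \<Longrightarrow> tri H a' b' c' \<Longrightarrow> {a, b, c} \<inter> {a', b', c'} = {} \<Longrightarrow> goodH H"
  unfolding goodH_def by blast

lemma goodK: assumes "m \<ge> 4" shows "goodH (complete_graph m)"
  unfolding goodH_def
proof (intro conjI ballI)
  show "\<exists>a b c. tri (complete_graph m) a b c"
    using assms by (intro exI[of _ 0] exI[of _ 1] exI[of _ 2]) (simp add: tri_def complete_graph_def)
  fix j
  show "\<exists>a b c. tri (complete_graph m) a b c \<and> j \<notin> {a, b, c}"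
  proof (cases "j \<in> {0,1,2}")
    case False then show ?thesis using assms
      by (intro exI[of _ 0] exI[of _ 1] exI[of _ 2]) (simp add: tri_def complete_graph_def)
  next
    case True
    then consider "j = 0" | "j = 1" | "j = 2" by blast
    then show ?thesis
    proof cases
      case 1 then show ?thesis using assms
        by (intro exI[of _ 1] exI[of _ 2] exI[of _ 3]) (simp add: tri_def complete_graph_def)
    next
      case 2 then show ?thesis using assms
        by (intro exI[of _ 0] exI[of _ 2] exI[of _ 3]) (simp add: tri_def complete_graph_def)
    next
      case 3 then show ?thesis using assms
        by (intro exI[of _ 0] exI[of _ 1] exI[of _ 3]) (simp add: tri_def complete_graph_def)
    qed
  qed
qed

lemma goodP: assumes "m \<ge> 4" shows "goodH (path_graph (m + 2))"
proof (rule good_disj)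
  show "tri (path_graph (m + 2)) 0 1 2" "tri (path_graph (m + 2)) 3 4 5"
    using assms by (simp_all add: tri_def path_graph_def)
qed auto

lemma goodC: assumes "m \<ge> 4" shows "goodH (cycle_graph m)"
  unfolding goodH_def
proof (intro conjI ballI)
  have A: "tri (cycle_graph m) 0 1 2" and B: "tri (cycle_graph m) 1 2 3"
    using assms by (simp_all add: tri_def cycle_graph_def)
  have C: "tri (cycle_graph m) (m - 1) 0 1"
    using assms by (simp add: tri_def cycle_graph_def)
  have D: "\<exists>e. tri (cycle_graph m) 2 3 e \<and> e \<noteq> 1"
  proof (cases "m = 4")
    case True then show ?thesis by (intro exI[of _ 0]) (simp add: tri_def cycle_graph_def)
  next
    case False then show ?thesis using assms by (intro exI[of _ 4]) (simp add: tri_def cycle_graph_def)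
  qed
  show "\<exists>a b c. tri (cycle_graph m) a b c" using A by blast
  fix j
  show "\<exists>a b c. tri (cycle_graph m) a b c \<and> j \<notin> {a, b, c}"
  proof (cases "j \<in> {0,1,2}")
    case False then show ?thesis using A by (intro exI[of _ 0] exI[of _ 1] exI[of _ 2]) simp
  next
    case True
    then consider "j = 0" | "j = 1" | "j = 2" by blast
    then show ?thesis
    proof cases
      case 1 then show ?thesis using B by (intro exI[of _ 1] exI[of _ 2] exI[of _ 3]) simp
    next
      case 2
      obtain e where "tri (cycle_graph m) 2 3 e" "e \<noteq> 1" using D by blast
      then show ?thesis using 2 by (intro exI[of _ 2] exI[of _ 3] exI[of _ e]) simp
    next
      case 3 then show ?thesis using C assms by (intro exI[of _ "m - 1"] exI[of _ 0] exI[of _ 1]) auto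
    qed
  qed
qed

lemma triL: "i < x \<Longrightarrow> tri (gunion (copies x (cycle_graph 3)) (copies y (path_graph 3))) (Inl (0, i)) (Inl (1, i)) (Inl (2, i))"
  by (simp add: tri_def gunion_def copies_def cycle_graph_def)

lemma triR: "i < y \<Longrightarrow> tri (gunion (copies x (cycle_graph 3)) (copies y (path_graph 3))) (Inr (0, i)) (Inr (1, i)) (Inr (2, i))"
  by (simp add: tri_def gunion_def copies_def path_graph_def)

lemma goodU: assumes "x + y \<ge> 2" shows "goodH (gunion (copies x (cycle_graph 3)) (copies y (path_graph 3)))"
proof -
  consider "x \<ge> 2" | "y \<ge> 2" | "x \<ge> 1 \<and> y \<ge> 1" using assms by linarith
  then show ?thesis
  proof cases
    case 1 then show ?thesis by (intro good_disj[OF triL[of 0] triL[of 1]]) auto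
  next
    case 2 then show ?thesis by (intro good_disj[OF triR[of 0] triR[of 1]]) auto
  next
    case 3 then show ?thesis by (intro good_disj[OF triL[of 0] triR[of 0]]) auto
  qed
qed




lemma iso_to_sub: assumes "graph_iso A B" shows "subgraph_of B A"
proof -
  obtain f where f: "bij_betw f (fst A) (fst B)" "\<forall>x\<in>fst A. \<forall>y\<in>fst A. snd A x y \<longleftrightarrow> snd B (f x) (f y)"
    using assms unfolding graph_iso_def by blast
  define g where "g = inv_into (fst A) f"
  have g: "bij_betw g (fst B) (fst A)" unfolding g_def by (rule bij_betw_inv_into[OF f(1)])
  have fg: "\<And>p. p \<in> fst B \<Longrightarrow> f (g p) = p" unfolding g_def by (rule bij_betw_inv_into_right[OF f(1)])
  have gA: "\<And>p. p \<in> fst B \<Longrightarrow> g p \<in> fst A" using g unfolding bij_betw_def by blast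
  have "\<forall>p\<in>fst B. \<forall>q\<in>fst B. snd B p q \<longrightarrow> snd A (g p) (g q)"
    using f(2) fg gA by metis
  then show ?thesis unfolding subgraph_of_def using g unfolding bij_betw_def by blast
qed

context sg
begin

lemma SRG: "fst (strong_resolving_graph G) = {x \<in> V. \<exists>y. mmd G x y}" "snd (strong_resolving_graph G) = mmd G"
  by (simp_all add: strong_resolving_graph_def)

lemma sub_map: assumes "subgraph_of H (strong_resolving_graph G)"
  obtains f where "inj_on f (fst H)" "f ` fst H \<subseteq> V" "\<forall>x\<in>fst H. \<forall>y\<in>fst H. snd H x y \<longrightarrow> mmd G (f x) (f y)"
  using assms unfolding subgraph_of_def SRG by blast

lemma tri_img: assumes "inj_on f (fst H)" "\<forall>x\<in>fst H. \<forall>y\<in>fst H. snd H x y \<longrightarrow> mmd G (f x) (f y)" "tri H a b c"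
  shows "mmd G (f b) (f a) \<and> mmd G (f b) (f c) \<and> f a \<noteq> f c"
  using assms unfolding tri_def inj_on_def by blast

lemma sub_F: assumes "subgraph_of H (strong_resolving_graph G)" "tri H a b c"
  shows "breaker_wins G False {} {}"
proof -
  obtain f where f: "inj_on f (fst H)" "f ` fst H \<subseteq> V" "\<forall>x\<in>fst H. \<forall>y\<in>fst H. snd H x y \<longrightarrow> mmd G (f x) (f y)"
    using sub_map[OF assms(1)] by blast
  have m: "mmd G (f b) (f a)" "mmd G (f b) (f c)" "f a \<noteq> f c" using tri_img[OF f(1,3) assms(2)] by auto
  show ?thesis by (rule L3[OF m]) (use mmd_V[OF m(1)] mmd_V[OF m(2)] in auto)
qed

lemma good_B: assumes "subgraph_of H (strong_resolving_graph G)" "goodH H"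
  shows "O_SR_B G"
proof -
  obtain f where f: "inj_on f (fst H)" "f ` fst H \<subseteq> V" "\<forall>x\<in>fst H. \<forall>y\<in>fst H. snd H x y \<longrightarrow> mmd G (f x) (f y)"
    using sub_map[OF assms(1)] by blast
  obtain a b c where t: "tri H a b c" using assms(2) unfolding goodH_def by blast
  have F: "breaker_wins G False {} {}" by (rule sub_F[OF assms(1) t])
  have ne: "V - {} - {} \<noteq> {}" using t f(2) unfolding tri_def by blast
  have "\<forall>v \<in> V - {} - {}. \<exists>a b c. mmd G b a \<and> mmd G b c \<and> a \<noteq> c \<and>
      a \<in> V - {} - {} - {v} \<and> b \<in> V - {} - {} - {v} \<and> c \<in> V - {} - {} - {v}"
  proof
    fix v assume v: "v \<in> V - {} - {}"
    obtain a0 b0 c0 where t0: "tri H a0 b0 c0" "f a0 \<noteq> v" "f b0 \<noteq> v" "f c0 \<noteq> v"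
    proof (cases "v \<in> f ` fst H")
      case True
      then obtain j where j: "j \<in> fst H" "v = f j" by blast
      then obtain a0 b0 c0 where "tri H a0 b0 c0" "j \<notin> {a0, b0, c0}" using assms(2) unfolding goodH_def by blast
      moreover then have "f a0 \<noteq> v" "f b0 \<noteq> v" "f c0 \<noteq> v"
        using j f(1) unfolding tri_def inj_on_def by auto
      ultimately show ?thesis using that by blast
    next
      case False
      then have "f a \<noteq> v" "f b \<noteq> v" "f c \<noteq> v" using t unfolding tri_def by auto
      then show ?thesis using that t by blast
    qed
    have m: "mmd G (f b0) (f a0)" "mmd G (f b0) (f c0)" "f a0 \<noteq> f c0" using tri_img[OF f(1,3) t0(1)] by auto
    show "\<exists>a b c. mmd G b a \<and> mmd G b c \<and> a \<noteq> c \<and>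
      a \<in> V - {} - {} - {v} \<and> b \<in> V - {} - {} - {v} \<and> c \<in> V - {} - {} - {v}"
      using m t0 mmd_V[OF m(1)] mmd_V[OF m(2)] by blast
  qed
  from L4[OF ne this] F show ?thesis unfolding O_SR_B_def by blast
qed

lemma iso_matching: assumes "graph_iso (strong_resolving_graph G) (copies n (complete_graph 2))"
  "mmd G u v" "mmd G u w" shows "v = w"
proof -
  define W where "W = {x \<in> V. \<exists>y. mmd G x y}"
  define C where "C = copies n (complete_graph 2)"
  obtain f where f0: "bij_betw f (fst (strong_resolving_graph G)) (fst C)"
    "\<forall>x\<in>fst (strong_resolving_graph G). \<forall>y\<in>fst (strong_resolving_graph G). snd (strong_resolving_graph G) x y \<longleftrightarrow> snd C (f x) (f y)"
    using assms(1) unfolding graph_iso_def C_def by blast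
  have Weq: "fst (strong_resolving_graph G) = W" unfolding W_def by (rule SRG(1))
  note f = f0[unfolded Weq SRG(2)]
  have W: "u \<in> W" "v \<in> W" "w \<in> W"
    unfolding W_def using mmd_V[OF assms(2)] mmd_V[OF assms(3)] assms(2,3) mmd_sym[OF assms(2)] mmd_sym[OF assms(3)] by blast+
  obtain a i where fu: "f u = (a, i)" by (cases "f u")
  obtain b j where fv: "f v = (b, j)" by (cases "f v")
  obtain c l where fw: "f w = (c, l)" by (cases "f w")
  have "snd C (a, i) (b, j)" using f(2) W assms(2) fu fv by metis
  then have 1: "i = j \<and> a < 2 \<and> b < 2 \<and> a \<noteq> b" unfolding C_def copies_def complete_graph_def by simp
  have "snd C (a, i) (c, l)" using f(2) W assms(3) fu fw by metis
  then have 2: "i = l \<and> a < 2 \<and> c < 2 \<and> a \<noteq> c" unfolding C_def copies_def complete_graph_def by simp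
  from 1 2 have "f v = f w" using fv fw by auto
  then show ?thesis using f(1) W unfolding bij_betw_def inj_on_def by blast
qed

lemma partA2: assumes "graph_iso (strong_resolving_graph G) (copies n (complete_graph 2))"
  shows "O_SR_M G"
proof -
  have "Inv {} {}" unfolding Inv_def using iso_matching[OF assms] by blast
  then show ?thesis unfolding O_SR_M_def using M1 by blast
qed

lemma partA1: assumes "O_SR_M G" "x \<in> V" "y \<in> V" "x \<noteq> y"
  shows "\<exists>n>0. graph_iso (strong_resolving_graph G) (copies n (complete_graph 2))"
proof -
  have match: "\<forall>u v w. mmd G u v \<longrightarrow> mmd G u w \<longrightarrow> v = w"
  proof (intro allI impI, rule ccontr)
    fix u v w assume m: "mmd G u v" "mmd G u w" "v \<noteq> w"
    have "breaker_wins G False {} {}" by (rule L3[OF m(1,2,3)]) (use mmd_V[OF m(1)] mmd_V[OF m(2)] in auto)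
    moreover have "maker_wins G False {} {}" using assms(1) unfolding O_SR_M_def by blast
    ultimately show False using no_both by blast
  qed
  define W where "W = {x \<in> V. \<exists>y. mmd G x y}"
  have "\<exists>f. bij_betw f W ({..<2::nat} \<times> {..<card W div 2}) \<and>
     (\<forall>a\<in>W. \<forall>b\<in>W. mmd G a b \<longleftrightarrow> (snd (f a) = snd (f b) \<and> fst (f a) \<noteq> fst (f b)))"
  proof (rule matching_iso[where R = "mmd G"])
    show "finite W" unfolding W_def using finV by simp
    show "\<forall>u\<in>W. \<exists>v. mmd G u v" unfolding W_def by blast
    show "\<forall>u\<in>W. \<forall>v w. mmd G u v \<longrightarrow> mmd G u w \<longrightarrow> v = w" using match by blast
    show "\<forall>u\<in>W. \<forall>v. mmd G u v \<longrightarrow> v \<in> W"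
    proof (intro ballI allI impI)
      fix u v assume uv: "mmd G u v"
      have "v \<in> V" using mmd_V[OF uv] by blast
      moreover have "mmd G v u" using mmd_sym[OF uv] .
      ultimately show "v \<in> W" unfolding W_def by blast
    qed
    show "\<forall>u v. mmd G u v \<longrightarrow> mmd G v u" by (auto simp: mmd_def)
    show "\<forall>u. \<not> mmd G u u" by (auto simp: mmd_def)
  qed
  then obtain f where f: "bij_betw f W ({..<2::nat} \<times> {..<card W div 2})"
     "\<forall>a\<in>W. \<forall>b\<in>W. mmd G a b \<longleftrightarrow> (snd (f a) = snd (f b) \<and> fst (f a) \<noteq> fst (f b))" by blast
  obtain u v where uv: "mmd G u v" using exists_mmd assms(2-4) by blast
  have "u \<in> W" "v \<in> W" "u \<noteq> v" unfolding W_def using uv mmd_V[OF uv] mmd_sym[OF uv] by blast+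
  moreover have "finite W" unfolding W_def using finV by simp
  ultimately have "card {u, v} \<le> card W" by (intro card_mono) auto
  then have pos: "card W div 2 > 0" using \<open>u \<noteq> v\<close> by simp
  have rng: "\<And>a. a \<in> W \<Longrightarrow> fst (f a) < 2 \<and> snd (f a) < card W div 2"
  proof -
    fix a assume "a \<in> W"
    then have "f a \<in> {..<2::nat} \<times> {..<card W div 2}" using f(1) unfolding bij_betw_def by blast
    then show "fst (f a) < 2 \<and> snd (f a) < card W div 2" by auto
  qed
  define n where "n = card W div 2"
  have Weq: "fst (strong_resolving_graph G) = W" unfolding W_def by (rule SRG(1))
  have cf: "fst (copies n (complete_graph 2)) = {..<2::nat} \<times> {..<n}" by (simp add: copies_def complete_graph_def)
  have cs: "\<And>p i q j. snd (copies n (complete_graph 2)) (p, i) (q, j) \<longleftrightarrow> (i = j \<and> i < n \<and> p < 2 \<and> q < 2 \<and> p \<noteq> q)"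
    by (simp add: copies_def complete_graph_def)
  have "graph_iso (strong_resolving_graph G) (copies n (complete_graph 2))"
    unfolding graph_iso_def Weq SRG(2) cf
  proof (intro exI conjI)
    show "bij_betw f W ({..<2::nat} \<times> {..<n})" using f(1) unfolding n_def .
    show "\<forall>a\<in>W. \<forall>b\<in>W. mmd G a b = snd (copies n (complete_graph 2)) (f a) (f b)"
    proof (intro ballI)
      fix a b assume ab': "a \<in> W" "b \<in> W"
      obtain p i where fa: "f a = (p, i)" by (cases "f a")
      obtain q j where fb: "f b = (q, j)" by (cases "f b")
      have e: "mmd G a b \<longleftrightarrow> (snd (f a) = snd (f b) \<and> fst (f a) \<noteq> fst (f b))" using f(2) ab' by blast
      have r1: "p < 2" "i < n" using rng[OF ab'(1)] fa unfolding n_def by auto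
      have r2: "q < 2" "j < n" using rng[OF ab'(2)] fb unfolding n_def by auto
      show "mmd G a b = snd (copies n (complete_graph 2)) (f a) (f b)"
        unfolding e fa fb cs using r1 r2 by auto
    qed
  qed
  then show ?thesis using pos unfolding n_def by blast
qed

lemma partB: assumes iso: "graph_iso (strong_resolving_graph G) (gunion H (copies n (complete_graph 2)))"
  and t: "tri H a b c" and k: "k \<in> fst H"
  and hp: "\<forall>j\<in>fst H. \<forall>j'\<in>fst H. \<forall>j''\<in>fst H.
    snd H j j' \<longrightarrow> snd H j j'' \<longrightarrow> j \<noteq> k \<longrightarrow> j' \<noteq> k \<longrightarrow> j'' \<noteq> k \<longrightarrow> j' = j''"
  shows "O_SR_N G"
proof -
  define C where "C = copies n (complete_graph 2)"
  have tg: "tri (gunion H C) (Inl a) (Inl b) (Inl c)"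
    using t unfolding tri_def gunion_def by auto
  have F: "breaker_wins G False {} {}" by (rule sub_F[OF iso_to_sub[OF iso[folded C_def]] tg])
  define W where "W = {x \<in> V. \<exists>y. mmd G x y}"
  obtain f where f0: "bij_betw f (fst (strong_resolving_graph G)) (fst (gunion H C))"
    "\<forall>x\<in>fst (strong_resolving_graph G). \<forall>y\<in>fst (strong_resolving_graph G). snd (strong_resolving_graph G) x y \<longleftrightarrow> snd (gunion H C) (f x) (f y)"
    using iso unfolding graph_iso_def C_def by blast
  have Weq: "fst (strong_resolving_graph G) = W" unfolding W_def by (rule SRG(1))
  note f = f0[unfolded Weq SRG(2)]
  define c0 where "c0 = inv_into W f (Inl k)"
  have kin: "Inl k \<in> fst (gunion H C)" using k unfolding gunion_def by auto
  have c0W: "c0 \<in> W" unfolding c0_def using bij_betw_inv_into[OF f(1)] kin unfolding bij_betw_def by blast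
  have fc0: "f c0 = Inl k" unfolding c0_def using bij_betw_inv_into_right[OF f(1) kin] .
  have gu: "q = r" if pqr: "p \<in> fst (gunion H C)" "q \<in> fst (gunion H C)" "r \<in> fst (gunion H C)"
    "p \<noteq> Inl k" "q \<noteq> Inl k" "r \<noteq> Inl k" "snd (gunion H C) p q" "snd (gunion H C) p r" for p q r
  proof (cases p)
    case (Inl j)
    then obtain j' j'' where q: "q = Inl j'" and r: "r = Inl j''"
      using pqr(7,8) unfolding gunion_def by (cases q; cases r) auto
    have "j \<in> fst H" "j' \<in> fst H" "j'' \<in> fst H" using pqr(1-3) Inl q r unfolding gunion_def by auto
    moreover have "snd H j j'" "snd H j j''" using pqr(7,8) Inl q r unfolding gunion_def by auto
    ultimately show ?thesis using hp pqr(4-6) Inl q r by blast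
  next
    case (Inr pp)
    then obtain q' r' where q: "q = Inr q'" and r: "r = Inr r'"
      using pqr(7,8) unfolding gunion_def by (cases q; cases r) auto
    obtain a1 i1 where "pp = (a1, i1)" by (cases pp)
    moreover obtain a2 i2 where "q' = (a2, i2)" by (cases q')
    moreover obtain a3 i3 where "r' = (a3, i3)" by (cases r')
    ultimately show ?thesis using pqr(7,8) Inr q r unfolding gunion_def C_def copies_def complete_graph_def by auto
  qed
  have "Inv {c0} {}" unfolding Inv_def
  proof (intro conjI allI impI)
    fix u v assume "mmd G u v" then show "u \<in> {c0} \<or> v \<in> {c0} \<or> u \<notin> {} \<and> v \<notin> {}" by blast
  next
    fix u v w assume m: "mmd G u v \<and> mmd G u w \<and> u \<notin> {c0} \<and> v \<notin> {c0} \<and> w \<notin> {c0}"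
    have W3: "u \<in> W" "v \<in> W" "w \<in> W" unfolding W_def using m mmd_V[of G u v] mmd_V[of G u w] mmd_sym[of G u v] mmd_sym[of G u w] by blast+
    have inj: "inj_on f W" using f(1) unfolding bij_betw_def by blast
    have img: "\<And>z. z \<in> W \<Longrightarrow> f z \<in> fst (gunion H C)" using f(1) unfolding bij_betw_def by blast
    have ne: "\<And>z. z \<in> W \<Longrightarrow> z \<noteq> c0 \<Longrightarrow> f z \<noteq> Inl k" using inj c0W fc0 unfolding inj_on_def by metis
    have "f v = f w"
      by (rule gu[of "f u"]) (use W3 img ne m f(2) in auto)
    then show "v = w" using inj W3 unfolding inj_on_def by blast
  qed
  then have "maker_wins G False {c0} {}" using M1 by blast
  then have "maker_wins G True {} {}" using c0W unfolding W_def by (intro maker_wins.maker_move[of c0]) auto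
  then show ?thesis using F unfolding O_SR_N_def by blast
qed

end




theorem mainTheorem3:
  fixes G :: "'a graph"
  assumes "simple_graph G" and "connected_graph G" and "card (fst G) \<ge> 2"
  shows "(O_SR_M G \<longleftrightarrow>
            (\<exists>x::nat. x > 0 \<and> graph_iso (strong_resolving_graph G) (copies x (complete_graph 2))))
       \<and> (\<forall>(H::nat graph) (x::nat). H \<in> {cycle_graph 3, path_graph 3, path_graph 4, path_graph 5} \<longrightarrow>
            graph_iso (strong_resolving_graph G) (gunion H (copies x (complete_graph 2))) \<longrightarrow> O_SR_N G)
       \<and> (\<forall>(m::nat) (H::nat graph). m \<ge> 4 \<longrightarrow>
            H \<in> {complete_graph m, cycle_graph m, path_graph (m + 2)} \<longrightarrow>
            subgraph_of H (strong_resolving_graph G) \<longrightarrow> O_SR_B G)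
       \<and> (\<forall>x y::nat. x + y \<ge> 2 \<longrightarrow>
            subgraph_of (gunion (copies x (cycle_graph 3)) (copies y (path_graph 3)))
                        (strong_resolving_graph G) \<longrightarrow> O_SR_B G)"
proof -
  interpret sg G using assms(1,2) by unfold_locales
  have "fst G \<noteq> {}" using assms(3) by auto
  then obtain x where x: "x \<in> fst G" by blast
  have "card (fst G - {x}) = card (fst G) - 1" using x finV by simp
  then have "card (fst G - {x}) \<noteq> 0" using assms(3) by linarith
  then have "fst G - {x} \<noteq> {}" by (metis card.empty)
  then obtain y where y: "y \<in> fst G" "x \<noteq> y" by blast
  have A: "O_SR_M G \<longleftrightarrow>
            (\<exists>x::nat. x > 0 \<and> graph_iso (strong_resolving_graph G) (copies x (complete_graph 2)))"
    using partA1[OF _ x y(1,2)] partA2 by blast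
  have B: "\<forall>(H::nat graph) (x::nat). H \<in> {cycle_graph 3, path_graph 3, path_graph 4, path_graph 5} \<longrightarrow>
            graph_iso (strong_resolving_graph G) (gunion H (copies x (complete_graph 2))) \<longrightarrow> O_SR_N G"
  proof (intro allI impI)
    fix H :: "nat graph" and n :: nat
    assume H: "H \<in> {cycle_graph 3, path_graph 3, path_graph 4, path_graph 5}"
      and iso: "graph_iso (strong_resolving_graph G) (gunion H (copies n (complete_graph 2)))"
    from H consider "H = cycle_graph 3" | "H = path_graph 3" | "H = path_graph 4" | "H = path_graph 5" by blast
    then show "O_SR_N G"
    proof cases
      case 1 show ?thesis
        by (rule partB[OF iso triH(1)[folded 1] _ hC3[folded 1]]) (simp add: 1 cycle_graph_def)
    next
      case 2 show ?thesis
        by (rule partB[OF iso triH(2)[folded 2] _ hP3[folded 2]]) (simp add: 2 path_graph_def)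
    next
      case 3 show ?thesis
        by (rule partB[OF iso triH(3)[folded 3] _ hP4[folded 3]]) (simp add: 3 path_graph_def)
    next
      case 4 show ?thesis
        by (rule partB[OF iso triH(4)[folded 4] _ hP5[folded 4]]) (simp add: 4 path_graph_def)
    qed
  qed
  have C: "\<forall>(m::nat) (H::nat graph). m \<ge> 4 \<longrightarrow>
            H \<in> {complete_graph m, cycle_graph m, path_graph (m + 2)} \<longrightarrow>
            subgraph_of H (strong_resolving_graph G) \<longrightarrow> O_SR_B G"
  proof (intro allI impI)
    fix m :: nat and H :: "nat graph"
    assume m: "m \<ge> 4" and H: "H \<in> {complete_graph m, cycle_graph m, path_graph (m + 2)}"
      and sub: "subgraph_of H (strong_resolving_graph G)"
    have "goodH H" using H goodK[OF m] goodC[OF m] goodP[OF m] by blast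
    then show "O_SR_B G" by (rule good_B[OF sub])
  qed
  have D: "\<forall>x y::nat. x + y \<ge> 2 \<longrightarrow>
            subgraph_of (gunion (copies x (cycle_graph 3)) (copies y (path_graph 3)))
                        (strong_resolving_graph G) \<longrightarrow> O_SR_B G"
    using good_B goodU by blast
  show ?thesis using A B C D by blast
qed



end
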